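(* Let $0<\varepsilon<1$ and $\Omega_\varepsilon=\{\lambda\in\mathbb C : |\mathrm{Re}\,\lambda|\le\varepsilon|\lambda|,\ \mathrm{Im}\,\lambda\le-\tfrac{1-\varepsilon}{2}\}$. Then there exists a constant $d>0$ and, for every $h\in\mathbb N$, a constant $C>0$ such that $$|\partial_\lambda^{\,h}\Gamma_\ell(\lambda)|\le C\,\ell^{d}\,(1+|\lambda|)^{-h-1}\qquad\text{for all }\ell\in\mathbb N^*=\{1,2,\dots\},\ \lambda\in\mathbb C\setminus\Omega_\varepsilon .$$
   Context: Let $m\ge2$ be an even integer and $k\ge1$ an integer, and set $Q=\frac m2+k$. Define $$\omega(r)=\tfrac14\cdot\tfrac m2\,(Q-1)\,\big(\sinh\tfrac r2\big)^{-2}+\tfrac k2\big(\tfrac k2-1\big)(\sinh r)^{-2}\qquad(r>0).$$ This function has an expansion $\omega(r)=\sum_{j\ge1}\omega_j e^{-jr}$ for $r>0$, with coefficients satisfying $\omega_j=O(j)$. The functions $\Gamma_\ell(\lambda)$, for $\ell\in\mathbb N$, are defined by the recurrence $$\Gamma_0=1,\qquad \ell\,(\ell-2i\lambda)\,\Gamma_\ell(\lambda)=\sum_{j=0}^{\ell-1}\omega_{\ell-j}\,\Gamma_j(\lambda)\qquad(\ell\ge1).$$ These are the coefficients in the expansion of the spherical function at infinity on a Damek–Ricci space: the poles of $\Gamma_\ell$ lie at $\lambda=-i\ell'/2$ for $\ell'\ge1$. *)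

theory Defs
  imports "HOL-Analysis.Analysis"
begin

definition Qpar :: "nat \<Rightarrow> nat \<Rightarrow> real" where
  "Qpar m k = real m / 2 + real k"

definition omega :: "nat \<Rightarrow> nat \<Rightarrow> real \<Rightarrow> real" where
  "omega m k r =
     1/4 * (real m / 2) * (Qpar m k - 1) * (1 / (sinh (r/2))\<^sup>2)
     + (real k / 2) * (real k / 2 - 1) * (1 / (sinh r)\<^sup>2)"

text \<open>The coefficients omega_j (j >= 1) of the expansion
  omega(r) = sum_{j>=1} omega_j e^{-jr}, valid for all r > 0.
  We set the (unused) index 0 to 0.\<close>
definition omega_coeff :: "nat \<Rightarrow> nat \<Rightarrow> nat \<Rightarrow> real" where
  "omega_coeff m k = (THE c. c 0 = 0 \<and>
     (\<forall>r>0. (\<lambda>j. c j * exp (- real j * r)) sums omega m k r))"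

function Gamma :: "nat \<Rightarrow> nat \<Rightarrow> nat \<Rightarrow> complex \<Rightarrow> complex" where
  "Gamma m k 0 lam = 1"
| "Gamma m k (Suc l) lam =
     (\<Sum>j<Suc l. complex_of_real (omega_coeff m k (Suc l - j)) * Gamma m k j lam)
     / (of_nat (Suc l) * (of_nat (Suc l) - 2 * \<i> * lam))"
  by pat_completeness auto
termination by (relation "Wellfounded.measure (\<lambda>(m,k,l,lam). l)") auto

definition Omega_eps :: "real \<Rightarrow> complex set" where
  "Omega_eps \<epsilon> = {lam. \<bar>Re lam\<bar> \<le> \<epsilon> * cmod lam \<and> Im lam \<le> - (1 - \<epsilon>) / 2}"

end

theory Submission
  imports Defs
begin


lemma ser1: fixes x :: real assumes "0 < x" "x < 1"
  shows "(\<lambda>j. real j * x ^ j) sums (x / (1 - x)\<^sup>2)"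
proof -
  have "(\<lambda>n. of_nat (Suc n) * x ^ n) sums (1 / (1 - x)^2)"
    using assms by (intro geometric_deriv_sums) auto
  hence "(\<lambda>n. x * (of_nat (Suc n) * x ^ n)) sums (x * (1 / (1 - x)^2))"
    by (rule sums_mult)
  hence "(\<lambda>n. real (Suc n) * x ^ Suc n) sums (x / (1 - x)^2)"
    by (simp add: algebra_simps)
  from sums_Suc[OF this] show ?thesis by simp
qed

lemma ser2: fixes x :: real assumes "0 < x" "x < 1"
  shows "(\<lambda>j. if even j then real j / 2 * x ^ j else 0) sums (x\<^sup>2 / (1 - x\<^sup>2)\<^sup>2)"
proof -
  have a: "0 < x\<^sup>2" "x\<^sup>2 < 1" using assms by (auto simp: power_less_one_iff)
  have "(\<lambda>i. real i * (x\<^sup>2) ^ i) sums (x\<^sup>2 / (1 - x\<^sup>2)\<^sup>2)" by (rule ser1[OF a])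
  moreover have "(\<lambda>i. real i * (x\<^sup>2) ^ i) = (\<lambda>i. (\<lambda>j. if even j then real j / 2 * x ^ j else 0) (2 * i))"
    by (auto simp: power_mult)
  ultimately have "(\<lambda>i. (\<lambda>j. if even j then real j / 2 * x ^ j else 0) (2 * i)) sums (x\<^sup>2 / (1 - x\<^sup>2)\<^sup>2)" by simp
  thus ?thesis
    by (subst (asm) sums_mono_reindex) (auto simp: strict_mono_def elim!: evenE)
qed

lemma sinh_half: fixes r :: real assumes "r > 0"
  shows "1 / (sinh (r/2))\<^sup>2 = 4 * (exp (-r) / (1 - exp (-r))\<^sup>2)"
proof -
  define y where "y = exp (r/2)"
  have y: "y > 1" using assms by (simp add: y_def)
  have e1: "exp r = y^2" by (simp add: y_def power2_eq_square flip: exp_add)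
  have e2: "exp (-r) = 1/y^2" by (simp add: exp_minus e1 field_simps)
  have e3: "exp (-(r/2)) = 1/y" by (simp add: exp_minus y_def inverse_eq_divide)
  have s: "sinh (r/2) = (y - 1/y)/2" by (simp add: sinh_def y_def e3)
  show ?thesis using y unfolding s e2
    by (simp add: field_simps power2_eq_square)
qed

lemma sinh_full: fixes r :: real assumes "r > 0"
  shows "1 / (sinh r)\<^sup>2 = 4 * ((exp (-r))\<^sup>2 / (1 - (exp (-r))\<^sup>2)\<^sup>2)"
proof -
  define y where "y = exp r"
  have y: "y > 1" using assms by (simp add: y_def)
  have e2: "exp (-r) = 1/y" by (simp add: exp_minus y_def inverse_eq_divide)
  have s: "sinh r = (y - 1/y)/2" by (simp add: sinh_def y_def e2)
  show ?thesis using y unfolding s e2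
    by (simp add: field_simps power2_eq_square)
qed

lemma powser_unique0:
  fixes D :: "nat \<Rightarrow> real"
  assumes "\<And>x. 0 < x \<Longrightarrow> x < 1 \<Longrightarrow> (\<lambda>j. D j * x ^ j) sums 0"
  shows "D n = 0"
proof (induction n rule: less_induct)
  case (less n)
  have sh: "(\<lambda>i. D (i + n) * x ^ i) sums 0" if "0 < x" "x < 1" for x
  proof -
    have "(\<lambda>i. D (i + n) * x ^ (i + n)) sums 0"
      using sums_zero_iff_shift[of n "\<lambda>j. D j * x ^ j" 0] less assms[OF that] by simp
    hence "(\<lambda>i. (D (i + n) * x ^ (i + n)) * (1 / x ^ n)) sums (0 * (1 / x ^ n))"
      by (rule sums_mult2)
    moreover have "(\<lambda>i. (D (i + n) * x ^ (i + n)) * (1 / x ^ n)) = (\<lambda>i. D (i + n) * x ^ i)"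
      using that by (auto simp: power_add)
    ultimately show ?thesis by simp
  qed
  define g where "g y = (\<Sum>i. D (i + n) * y ^ i)" for y :: real
  have "summable (\<lambda>i. D (i + n) * (1/2) ^ i)" using sh[of "1/2"] sums_summable by auto
  hence "isCont g 0" unfolding g_def by (rule isCont_powser) simp
  hence "(g \<longlongrightarrow> g 0) (at_right 0)"
    by (simp add: isCont_def filterlim_at_split)
  moreover have "eventually (\<lambda>y. g y = 0) (at_right (0::real))"
    unfolding eventually_at_right[of 0 "1::real", simplified]
    by (rule exI[of _ 1]) (auto simp: g_def sums_unique[OF sh, symmetric])
  ultimately have "((\<lambda>_. 0) \<longlongrightarrow> g 0) (at_right (0::real))"
    using tendsto_cong[of g "\<lambda>_. 0" "at_right (0::real)" "g 0"] by simp
  hence "g 0 = 0" by (simp add: tendsto_const_iff trivial_limit_at_right_real)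
  thus ?case by (simp add: g_def)
qed

definition oc :: "nat \<Rightarrow> nat \<Rightarrow> nat \<Rightarrow> real" where
  "oc m k j = (real m/2) * (Qpar m k - 1) * real j
     + 4 * ((real k/2) * (real k/2 - 1)) * (if even j then real j / 2 else 0)"

lemma oc_sums: assumes "r > 0"
  shows "(\<lambda>j. oc m k j * exp (- real j * r)) sums omega m k r"
proof -
  define x where "x = exp (-r)"
  have x: "0 < x" "x < 1" using assms by (auto simp: x_def)
  have ex: "exp (- real j * r) = x ^ j" for j
    by (simp add: x_def flip: exp_of_nat_mult)
  have "(\<lambda>j. (real m/2) * (Qpar m k - 1) * (real j * x ^ j)
     + 4 * ((real k/2) * (real k/2 - 1)) * (if even j then real j / 2 * x ^ j else 0))
     sums ((real m/2) * (Qpar m k - 1) * (x / (1 - x)\<^sup>2)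
     + 4 * ((real k/2) * (real k/2 - 1)) * (x\<^sup>2 / (1 - x\<^sup>2)\<^sup>2))"
    by (intro sums_add sums_mult ser1 ser2 x)
  moreover have "omega m k r = (real m/2) * (Qpar m k - 1) * (x / (1 - x)\<^sup>2)
     + 4 * ((real k/2) * (real k/2 - 1)) * (x\<^sup>2 / (1 - x\<^sup>2)\<^sup>2)"
  proof -
    have "x\<^sup>2 < 1" using x by (auto simp: power_less_one_iff)
    hence "1 - x \<noteq> 0" "1 - x\<^sup>2 \<noteq> 0" using x by auto
    thus ?thesis unfolding omega_def sinh_half[OF assms] sinh_full[OF assms] x_def[symmetric]
      by (simp add: field_simps)
  qed
  moreover have "(\<lambda>j. oc m k j * exp (- real j * r)) = (\<lambda>j. (real m/2) * (Qpar m k - 1) * (real j * x ^ j)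
     + 4 * ((real k/2) * (real k/2 - 1)) * (if even j then real j / 2 * x ^ j else 0))"
    by (rule ext) (simp only: ex oc_def, simp add: algebra_simps)
  ultimately show ?thesis by simp
qed

lemma omega_coeff_eq: "omega_coeff m k = oc m k"
  unfolding omega_coeff_def
proof (rule the_equality)
  show "oc m k 0 = 0 \<and> (\<forall>r>0. (\<lambda>j. oc m k j * exp (- real j * r)) sums omega m k r)"
    using oc_sums by (simp add: oc_def)
next
  fix c assume c: "c 0 = 0 \<and> (\<forall>r>0. (\<lambda>j. c j * exp (- real j * r)) sums omega m k r)"
  show "c = oc m k"
  proof
    fix n
    have "(\<lambda>j. c j - oc m k j) n = 0"
    proof (rule powser_unique0)
      fix x :: real assume x: "0 < x" "x < 1"
      define r where "r = - ln x"
      have r: "r > 0" using x by (simp add: r_def)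
      have ex: "exp (- real j * r) = x ^ j" for j
      proof -
        have "exp (real j * ln x) = exp (ln x) ^ j" by (rule exp_of_nat_mult)
        thus ?thesis using x by (simp add: r_def)
      qed
      have "(\<lambda>j. c j * exp (- real j * r) - oc m k j * exp (- real j * r)) sums (omega m k r - omega m k r)"
        using c r oc_sums[OF r] by (intro sums_diff) auto
      moreover have "(\<lambda>j. c j * exp (- real j * r) - oc m k j * exp (- real j * r)) = (\<lambda>j. (c j - oc m k j) * x ^ j)"
        by (rule ext) (simp only: ex left_diff_distrib)
      ultimately show "(\<lambda>j. (c j - oc m k j) * x ^ j) sums 0" by simp
    qed
    thus "c n = oc m k n" by simp
  qed
qed

lemma oc_bound: "\<bar>oc m k j\<bar> \<le> (\<bar>(real m/2) * (Qpar m k - 1)\<bar> + \<bar>4 * ((real k/2) * (real k/2 - 1))\<bar>) * real j"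
proof -
  have "\<bar>oc m k j\<bar> \<le> \<bar>(real m/2) * (Qpar m k - 1)\<bar> * real j
     + \<bar>4 * ((real k/2) * (real k/2 - 1))\<bar> * (if even j then real j / 2 else 0)"
    unfolding oc_def by (rule order.trans[OF abs_triangle_ineq]) (simp add: abs_mult)
  also have "\<dots> \<le> \<bar>(real m/2) * (Qpar m k - 1)\<bar> * real j
     + \<bar>4 * ((real k/2) * (real k/2 - 1))\<bar> * real j"
    by (intro add_left_mono mult_left_mono) auto
  finally show ?thesis by (simp add: algebra_simps)
qed



definition smooth :: "complex set \<Rightarrow> (complex \<Rightarrow> complex) \<Rightarrow> bool" where
  "smooth U f \<longleftrightarrow> (\<forall>n. (deriv ^^ n) f holomorphic_on U)"

lemma sm_hfd:
  assumes "smooth U f" "open U" "z \<in> U"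
  shows "((deriv ^^ n) f has_field_derivative (deriv ^^ Suc n) f z) (at z)"
proof -
  have "(deriv ^^ n) f field_differentiable at z"
    using assms by (intro holomorphic_on_imp_differentiable_at) (auto simp: smooth_def)
  thus ?thesis by (simp add: DERIV_deriv_iff_field_differentiable)
qed

lemma hd_const: "(deriv ^^ n) (\<lambda>w. c) = (\<lambda>w. if n=0 then c else 0)"
  by (induction n) auto

lemma hd_lin: "(deriv ^^ n) (\<lambda>w. a + b * w) = (\<lambda>z. if n = 0 then a + b * z else if n = 1 then b else 0)"
proof (induction n)
  case (Suc n)
  show ?case
  proof (cases n)
    case 0
    have "deriv (\<lambda>w. a + b * w) z = b" for z
      by (rule DERIV_imp_deriv) (auto intro!: derivative_eq_intros)
    thus ?thesis using 0 by auto
  qed (use Suc in auto)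
qed auto

lemma smooth_const: "smooth U (\<lambda>w. c)"
  by (auto simp: smooth_def hd_const)

lemma smooth_lin: "smooth U (\<lambda>w. a + b * w)"
  unfolding smooth_def hd_lin
proof
  fix n :: nat
  show "(\<lambda>z. if n = 0 then a + b * z else if n = 1 then b else 0) holomorphic_on U"
    by (cases "n = 0"; cases "n = 1") (auto intro!: holomorphic_intros)
qed

lemma Suc_choose: "Suc n choose k = (n choose k) + (if k = 0 then 0 else (n choose (k-1)))"
  by (cases k) simp_all

lemma hd_add:
  fixes z::complex
  assumes "smooth S f" "smooth S g" "open S" and z: "z \<in> S"
    shows "(deriv ^^ n) (\<lambda>w. f w + g w) z = (deriv ^^ n) f z + (deriv ^^ n) g z"
using z
proof (induction n arbitrary: z)
  case 0 then show ?case by simp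
next
  case (Suc n z)
  have *: "((deriv ^^ n) f has_field_derivative deriv ((deriv ^^ n) f) z) (at z)"
          "((deriv ^^ n) g has_field_derivative deriv ((deriv ^^ n) g) z) (at z)"
    using Suc.prems assms sm_hfd[of S _ z n] by auto
  have "\<And>x. x \<in> S \<Longrightarrow> (deriv ^^ n) f x + (deriv ^^ n) g x = (deriv ^^ n) (\<lambda>w. f w + g w) x"
    by (auto simp add: Suc)
  then have "((deriv ^^ n) (\<lambda>w. f w + g w) has_field_derivative
        deriv ((deriv ^^ n) f) z + deriv ((deriv ^^ n) g) z) (at z)"
    using  has_field_derivative_transform_within_open [of "\<lambda>w. (deriv ^^ n) f w + (deriv ^^ n) g w"]
    using "*" Deriv.field_differentiable_add Suc.prems \<open>open S\<close> by blast
  then show ?case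
    by (simp add: DERIV_imp_deriv)
qed

lemma smooth_add:
  assumes "smooth S f" "smooth S g" "open S"
  shows "smooth S (\<lambda>w. f w + g w)"
  unfolding smooth_def
proof
  fix n
  have "(\<lambda>w. (deriv ^^ n) f w + (deriv ^^ n) g w) holomorphic_on S"
    using assms by (intro holomorphic_intros) (auto simp: smooth_def)
  thus "(deriv ^^ n) (\<lambda>w. f w + g w) holomorphic_on S"
    by (rule holomorphic_transform) (use hd_add[OF assms] in auto)
qed

lemma hd_mult:
  fixes z::complex
  assumes "smooth S f" "smooth S g" "open S" and z: "z \<in> S"
    shows "(deriv ^^ n) (\<lambda>w. f w * g w) z =
           (\<Sum>i = 0..n. of_nat (n choose i) * (deriv ^^ i) f z * (deriv ^^ (n-i)) g z)"
using z
proof (induction n arbitrary: z)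
  case 0 then show ?case by simp
next
  case (Suc n z)
  have *: "\<And>n. ((deriv ^^ n) f has_field_derivative deriv ((deriv ^^ n) f) z) (at z)"
          "\<And>n. ((deriv ^^ n) g has_field_derivative deriv ((deriv ^^ n) g) z) (at z)"
    using Suc.prems assms sm_hfd[of S _ z] by auto
  have sumeq: "(\<Sum>i = 0..n.
               of_nat (n choose i) * (deriv ((deriv ^^ i) f) z * (deriv ^^ (n-i)) g z + deriv ((deriv ^^ (n-i)) g) z * (deriv ^^ i) f z)) =
            g z * deriv ((deriv ^^ n) f) z + (\<Sum>i = 0..n. (deriv ^^ i) f z * (of_nat (Suc n choose i) * (deriv ^^ (Suc n - i)) g z))"
    apply (simp add: Suc_choose algebra_simps sum.distrib)
    apply (subst (4) sum_Suc_reindex)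
    apply (auto simp: algebra_simps Suc_diff_le intro: sum.cong)
    done
  have "((deriv ^^ n) (\<lambda>w. f w * g w) has_field_derivative
         (\<Sum>i = 0..Suc n. (Suc n choose i) * (deriv ^^ i) f z * (deriv ^^ (Suc n - i)) g z))
        (at z)"
    apply (rule has_field_derivative_transform_within_open
        [of "\<lambda>w. (\<Sum>i = 0..n. of_nat (n choose i) * (deriv ^^ i) f w * (deriv ^^ (n-i)) g w)" _ _ S])
       apply (simp add: algebra_simps)
       apply (rule derivative_eq_intros | simp)+
           apply (auto intro: DERIV_mult * \<open>open S\<close> Suc.prems Suc.IH [symmetric])
    by (metis (no_types, lifting) mult.commute sum.cong sumeq)
  then show ?case
    unfolding funpow.simps o_apply
    by (simp add: DERIV_imp_deriv)
qed

lemma smooth_mult: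
  assumes "smooth S f" "smooth S g" "open S"
  shows "smooth S (\<lambda>w. f w * g w)"
  unfolding smooth_def
proof
  fix n
  have "(\<lambda>z. \<Sum>i = 0..n. of_nat (n choose i) * (deriv ^^ i) f z * (deriv ^^ (n-i)) g z) holomorphic_on S"
    using assms by (intro holomorphic_intros) (auto simp: smooth_def)
  thus "(deriv ^^ n) (\<lambda>w. f w * g w) holomorphic_on S"
    by (rule holomorphic_transform) (use hd_mult[OF assms] in auto)
qed

lemma hd_cmult:
  assumes "smooth S f" "open S" "z \<in> S"
  shows "(deriv ^^ n) (\<lambda>w. c * f w) z = c * (deriv ^^ n) f z"
proof -
  have "(deriv ^^ n) (\<lambda>w. c * f w) z = (\<Sum>i = 0..n. of_nat (n choose i) * (deriv ^^ i) (\<lambda>w. c) z * (deriv ^^ (n-i)) f z)"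
    by (rule hd_mult[OF smooth_const assms])
  also have "\<dots> = (\<Sum>i \<in> {0}. of_nat (n choose i) * (deriv ^^ i) (\<lambda>w. c) z * (deriv ^^ (n-i)) f z)"
    by (rule sum.mono_neutral_right) (auto simp: hd_const)
  finally show ?thesis by (simp add: hd_const)
qed

lemma smooth_sum:
  assumes "finite I" "\<And>i. i \<in> I \<Longrightarrow> smooth S (f i)" "open S"
  shows "smooth S (\<lambda>w. \<Sum>i\<in>I. f i w) \<and>
         (\<forall>z\<in>S. \<forall>n. (deriv ^^ n) (\<lambda>w. \<Sum>i\<in>I. f i w) z = (\<Sum>i\<in>I. (deriv ^^ n) (f i) z))"
  using assms(1,2)
proof (induction I rule: finite_induct)
  case empty
  then show ?case by (simp add: smooth_const hd_const)
next
  case (insert x F)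
  have s1: "smooth S (f x)" and s2: "smooth S (\<lambda>w. \<Sum>i\<in>F. f i w)" using insert by auto
  show ?case using insert smooth_add[OF s1 s2 assms(3)] hd_add[OF s1 s2 assms(3)] by auto
qed

lemma hd_inv:
  fixes a b z :: complex
  assumes "a + b * z \<noteq> 0"
  shows "(deriv ^^ n) (\<lambda>w. 1 / (a + b * w)) z = fact n * (-b)^n / (a + b * z)^(Suc n)"
  using assms
proof (induction n arbitrary: z)
  case 0 then show ?case by simp
next
  case (Suc n z)
  define V where "V = {w. a + b * w \<noteq> 0}"
  have "open V" unfolding V_def by (intro open_Collect_neq continuous_intros)
  have "eventually (\<lambda>w. w \<in> V) (nhds z)"
    using Suc.prems \<open>open V\<close> by (intro eventually_nhds_in_open) (auto simp: V_def)
  hence ev: "eventually (\<lambda>w. (deriv ^^ n) (\<lambda>w. 1 / (a + b * w)) w = fact n * (-b)^n / (a + b * w)^(Suc n)) (nhds z)"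
    by eventually_elim (auto simp: V_def Suc.IH)
  have "(deriv ^^ Suc n) (\<lambda>w. 1 / (a + b * w)) z = deriv ((deriv ^^ n) (\<lambda>w. 1 / (a + b * w))) z"
    by simp
  also have "\<dots> = deriv (\<lambda>w. fact n * (-b)^n / (a + b * w)^(Suc n)) z"
    by (rule deriv_cong_ev[OF ev refl])
  also have "\<dots> = fact (Suc n) * (-b)^(Suc n) / (a + b * z)^(Suc (Suc n))"
  proof (rule DERIV_imp_deriv)
    define u where "u = a + b * z"
    have u: "u \<noteq> 0" "u ^ n \<noteq> 0" using Suc.prems by (auto simp: u_def)
    have "((\<lambda>w. fact n * (-b)^n / (a + b * w)^(Suc n)) has_field_derivative
       (- (fact n * (-b)^n) * (of_nat (Suc n) * (0 + b * 1) * (a + b * z) ^ (Suc n - 1)) / ((a + b * z)^(Suc n) * (a + b * z)^(Suc n)))) (at z)"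
      by (rule derivative_eq_intros refl | use Suc.prems in simp)+
    moreover have "(- (fact n * (-b)^n) * (of_nat (Suc n) * (0 + b * 1) * (a + b * z) ^ (Suc n - 1)) / ((a + b * z)^(Suc n) * (a + b * z)^(Suc n)))
       = fact (Suc n) * (-b)^(Suc n) / (a + b * z)^(Suc (Suc n))"
      unfolding u_def[symmetric] using u by (simp add: field_simps)
    ultimately show "((\<lambda>w. fact n * (-b)^n / (a + b * w)^(Suc n)) has_field_derivative
       fact (Suc n) * (-b)^(Suc n) / (a + b * z)^(Suc (Suc n))) (at z)" by simp
  qed
  finally show ?case .
qed

lemma smooth_inv:
  assumes "\<And>z. z \<in> S \<Longrightarrow> a + b * z \<noteq> 0"
  shows "smooth S (\<lambda>w. 1 / (a + b * w))"
  unfolding smooth_def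
proof
  fix n
  have "(\<lambda>z. fact n * (-b)^n / (a + b * z)^(Suc n)) holomorphic_on S"
    using assms by (intro holomorphic_intros) auto
  thus "(deriv ^^ n) (\<lambda>w. 1 / (a + b * w)) holomorphic_on S"
  proof (rule holomorphic_transform)
    fix x assume "x \<in> S"
    from hd_inv[OF assms[OF this], of n]
    show "fact n * (-b)^n / (a + b * x)^(Suc n) = (deriv ^^ n) (\<lambda>w. 1 / (a + b * w)) x" by simp
  qed
qed



lemma open_U: "open (- Omega_eps e)"
proof -
  have "closed (Omega_eps e)" unfolding Omega_eps_def
    by (intro closed_Collect_conj closed_Collect_le continuous_intros)
  thus ?thesis by (simp add: open_Compl)
qed

lemma reg1:
  fixes lam :: complex and L e :: real
  assumes e: "0 < e" "e < 1" and lam: "lam \<notin> Omega_eps e" and L: "L \<ge> 1"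
  shows "cmod (of_real L - 2 * \<i> * lam) \<ge> (e/2) * L"
proof -
  define X where "X = cmod (of_real L - 2 * \<i> * lam)"
  have re: "Re (of_real L - 2 * \<i> * lam) = L + 2 * Im lam" by simp
  have im: "Im (of_real L - 2 * \<i> * lam) = - 2 * Re lam" by simp
  have X1: "X \<ge> L + 2 * Im lam" using abs_Re_le_cmod[of "of_real L - 2 * \<i> * lam"] re X_def by linarith
  have X2: "X \<ge> 2 * \<bar>Re lam\<bar>" using abs_Im_le_cmod[of "of_real L - 2 * \<i> * lam"] im X_def by simp
  have "cmod (of_real L) \<le> X + cmod (2 * \<i> * lam)" unfolding X_def
    using norm_triangle_ineq[of "of_real L - 2 * \<i> * lam" "2 * \<i> * lam"] by simp
  hence X3: "X \<ge> L - 2 * cmod lam" using L by (simp add: norm_mult)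
  from lam have "\<bar>Re lam\<bar> > e * cmod lam \<or> Im lam > - (1 - e) / 2"
    unfolding Omega_eps_def by auto
  thus ?thesis
  proof
    assume a: "\<bar>Re lam\<bar> > e * cmod lam"
    show ?thesis
    proof (cases "cmod lam \<le> L/4")
      case True
      have "e * L \<le> 1 * L" using e L by (intro mult_right_mono) auto
      thus ?thesis using True X3 unfolding X_def[symmetric] by linarith
    next
      case False
      hence "e * L / 2 \<le> 2 * e * cmod lam" using e by (auto intro: mult_left_mono)
      thus ?thesis using a X2 unfolding X_def[symmetric] by linarith
    qed
  next
    assume a: "Im lam > - (1 - e) / 2"
    have "(1 - e) * (L - 1) \<ge> 0" using e L by auto
    hence "e * L \<le> L - 1 + e" by (simp add: algebra_simps)
    moreover have "e - 1 < 2 * Im lam" using a by (simp add: field_simps)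
    ultimately have "e * L \<le> X" using X1 unfolding X_def[symmetric] by linarith
    moreover have "e / 2 * L \<le> e * L" using e L by (simp add: mult_right_mono)
    ultimately show ?thesis unfolding X_def[symmetric] by linarith
  qed
qed

lemma reg2:
  fixes lam :: complex and L e :: real
  assumes e: "0 < e" "e < 1" and lam: "lam \<notin> Omega_eps e" and L: "L \<ge> 1"
  shows "cmod (of_real L - 2 * \<i> * lam) \<ge> (e/4) * (1 + cmod lam)"
proof -
  define X where "X = cmod (of_real L - 2 * \<i> * lam)"
  define c where "c = e / 2"
  have c: "0 < c" "c \<le> 1" using e by (auto simp: c_def)
  have X1: "X \<ge> c * L" using reg1[OF assms] by (simp add: X_def c_def)
  have "cmod (2 * \<i> * lam) \<le> X + cmod (of_real L :: complex)" unfolding X_def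
    using norm_triangle_ineq[of "2 * \<i> * lam - of_real L" "of_real L"] norm_minus_commute[of "2 * \<i> * lam" "of_real L"] by simp
  hence X2: "2 * cmod lam \<le> X + L" using L by (simp add: norm_mult)
  have "c * L \<le> X" by (rule X1)
  have "c * (2 * cmod lam) \<le> c * (X + L)" using X2 c by (intro mult_left_mono) auto
  hence "2 * (c * cmod lam) \<le> c * X + X" using X1 by (simp add: algebra_simps)
  hence "2 * (c * cmod lam) \<le> 2 * X" using c X1 by (smt (verit) mult_left_le_one_le norm_ge_zero X_def)
  hence "c * cmod lam \<le> X" by simp
  have "c * 1 \<le> c * L" using c L by (intro mult_left_mono) auto
  hence "c * (1 + cmod lam) \<le> 2 * X" using \<open>c * cmod lam \<le> X\<close> X1 by (simp add: algebra_simps)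
  thus ?thesis unfolding X_def c_def by simp
qed



lemma Gamma_Suc_fun:
  "Gamma m k (Suc l) = (\<lambda>z. (\<Sum>j<Suc l. complex_of_real (omega_coeff m k (Suc l - j)) * Gamma m k j z)
      * (1 / (of_nat (Suc l) * of_nat (Suc l) + (- 2 * \<i> * of_nat (Suc l)) * z)))"
proof
  fix z
  have "of_nat (Suc l) * (of_nat (Suc l) - 2 * \<i> * z) = of_nat (Suc l) * of_nat (Suc l) + (- 2 * \<i> * of_nat (Suc l)) * (z::complex)"
    by (simp add: algebra_simps)
  thus "Gamma m k (Suc l) z = (\<Sum>j<Suc l. complex_of_real (omega_coeff m k (Suc l - j)) * Gamma m k j z)
      * (1 / (of_nat (Suc l) * of_nat (Suc l) + (- 2 * \<i> * of_nat (Suc l)) * z))"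
    by (simp only: Gamma.simps) (simp add: divide_inverse)
qed

lemma pnz:
  assumes e: "0 < e" "e < 1" and z: "z \<in> - Omega_eps e" and L: "L \<ge> 1"
  shows "of_nat L * of_nat L + (- 2 * \<i> * of_nat L) * z \<noteq> 0"
proof -
  have "cmod (of_real (real L) - 2 * \<i> * z) \<ge> (e/2) * real L"
    using reg1[OF e, of z "real L"] z L by auto
  moreover have "(e/2) * real L > 0" using e L by auto
  ultimately have "of_real (real L) - 2 * \<i> * z \<noteq> 0" by auto
  hence "of_nat L * (of_nat L - 2 * \<i> * z) \<noteq> 0" using L by auto
  moreover have "of_nat L * (of_nat L - 2 * \<i> * z) = of_nat L * of_nat L + (- 2 * \<i> * of_nat L) * z"
    by (simp add: algebra_simps)
  ultimately show ?thesis by simp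
qed

lemma Gamma_smooth:
  assumes e: "0 < e" "e < 1"
  shows "smooth (- Omega_eps e) (Gamma m k l)"
proof (induction l rule: less_induct)
  case (less l)
  show ?case
  proof (cases l)
    case 0
    have "Gamma m k 0 = (\<lambda>_. 1)" by auto
    thus ?thesis using 0 by (simp add: smooth_const)
  next
    case (Suc n)
    have s1: "smooth (- Omega_eps e) (\<lambda>w. \<Sum>j<Suc n. complex_of_real (omega_coeff m k (Suc n - j)) * Gamma m k j w)"
      using smooth_sum[of "{..<Suc n}" "- Omega_eps e" "\<lambda>j w. complex_of_real (omega_coeff m k (Suc n - j)) * Gamma m k j w"]
        less Suc open_U smooth_mult smooth_const by auto
    have s2: "smooth (- Omega_eps e) (\<lambda>w. 1 / (of_nat (Suc n) * of_nat (Suc n) + (- 2 * \<i> * of_nat (Suc n)) * w))"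
      by (rule smooth_inv, rule pnz[OF e]) auto
    show ?thesis unfolding Suc Gamma_Suc_fun by (rule smooth_mult[OF s1 s2 open_U])
  qed
qed

lemma collapse:
  fixes a b :: complex and G :: "nat \<Rightarrow> complex"
  shows "(\<Sum>i = 0..h. of_nat (h choose i) * (if i = 0 then a + b * z else if i = 1 then b else 0) * G (h - i))
     = (a + b * z) * G h + (if h = 0 then 0 else of_nat h * b * G (h - 1))"
proof (cases h)
  case 0 thus ?thesis by simp
next
  case (Suc n)
  have "(\<Sum>i = 0..Suc n. of_nat (Suc n choose i) * (if i = 0 then a + b * z else if i = 1 then b else 0) * G (Suc n - i))
    = (a + b * z) * G (Suc n) + (\<Sum>i = 0..n. of_nat (Suc n choose Suc i) * (if Suc i = 1 then b else 0) * G (Suc n - Suc i))"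
    by (subst sum.atLeast0_atMost_Suc_shift) simp
  also have "(\<Sum>i = 0..n. of_nat (Suc n choose Suc i) * (if Suc i = 1 then b else 0) * G (Suc n - Suc i))
     = (\<Sum>i = 0..n. if i = 0 then of_nat (Suc n) * b * G n else 0)"
    by (rule sum.cong) auto
  also have "\<dots> = of_nat (Suc n) * b * G n" by (simp add: sum.delta)
  finally show ?thesis using Suc by simp
qed

lemma Gamma_rec_deriv:
  fixes l :: nat and z :: complex
  assumes e: "0 < e" "e < 1" and z: "z \<in> - Omega_eps e"
  defines "L \<equiv> Suc l"
  shows "(of_nat L * of_nat L + (- 2 * \<i> * of_nat L) * z) * (deriv ^^ h) (Gamma m k L) z
     + (if h = 0 then 0 else of_nat h * (- 2 * \<i> * of_nat L) * (deriv ^^ (h - 1)) (Gamma m k L) z)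
     = (\<Sum>j<L. complex_of_real (omega_coeff m k (L - j)) * (deriv ^^ h) (Gamma m k j) z)"
proof -
  define U where "U = - Omega_eps e"
  have U: "open U" "z \<in> U" using open_U z by (auto simp: U_def)
  define a :: complex where "a = of_nat L * of_nat L"
  define b :: complex where "b = - 2 * \<i> * of_nat L"
  define S where "S = (\<lambda>w. \<Sum>j<L. complex_of_real (omega_coeff m k (L - j)) * Gamma m k j w)"
  have pn: "a + b * w \<noteq> 0" if "w \<in> U" for w
    using pnz[OF e, of w L] that by (auto simp: U_def a_def b_def L_def)
  have eq: "(a + b * w) * Gamma m k L w = S w" if "w \<in> U" for w
    using pn[OF that] unfolding L_def Gamma_Suc_fun by (simp add: S_def a_def b_def L_def)
  have sG: "smooth U (Gamma m k j)" for j using Gamma_smooth[OF e] by (simp add: U_def)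
  have "(deriv ^^ h) (\<lambda>w. (a + b * w) * Gamma m k L w) z = (deriv ^^ h) S z"
    by (rule higher_deriv_cong_ev[OF _ refl]) (use U eq eventually_nhds_in_open[OF U] in \<open>auto elim!: eventually_mono\<close>)
  moreover have "(deriv ^^ h) (\<lambda>w. (a + b * w) * Gamma m k L w) z
     = (\<Sum>i = 0..h. of_nat (h choose i) * (deriv ^^ i) (\<lambda>w. a + b * w) z * (deriv ^^ (h - i)) (Gamma m k L) z)"
    by (rule hd_mult[OF smooth_lin sG U])
  moreover have "\<dots> = (a + b * z) * (deriv ^^ h) (Gamma m k L) z + (if h = 0 then 0 else of_nat h * b * (deriv ^^ (h - 1)) (Gamma m k L) z)"
    unfolding hd_lin by (rule collapse)
  moreover have "(deriv ^^ h) S z = (\<Sum>j<L. (deriv ^^ h) (\<lambda>w. complex_of_real (omega_coeff m k (L - j)) * Gamma m k j w) z)"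
    using smooth_sum[of "{..<L}" U "\<lambda>j w. complex_of_real (omega_coeff m k (L - j)) * Gamma m k j w"]
      U sG smooth_mult smooth_const unfolding S_def by auto
  moreover have "\<dots> = (\<Sum>j<L. complex_of_real (omega_coeff m k (L - j)) * (deriv ^^ h) (Gamma m k j) z)"
    by (rule sum.cong[OF refl]) (rule hd_cmult[OF sG U])
  ultimately show ?thesis by (simp add: a_def b_def)
qed



lemma pw_step:
  fixes x :: real assumes "x \<ge> 0"
  shows "real (Suc d) * x ^ d \<le> (x + 1) ^ Suc d - x ^ Suc d"
proof (induction d)
  case 0 thus ?case by simp
next
  case (Suc d)
  have "(x + 1) * (x ^ Suc d + real (Suc d) * x ^ d) \<le> (x + 1) * (x + 1) ^ Suc d"
    using Suc assms by (intro mult_left_mono) auto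
  moreover have "(x + 1) * (x ^ Suc d + real (Suc d) * x ^ d) = x ^ Suc (Suc d) + real (Suc (Suc d)) * x ^ Suc d + real (Suc d) * x ^ d"
    by (simp add: algebra_simps)
  moreover have "real (Suc d) * x ^ d \<ge> 0" using assms by simp
  ultimately show ?case by simp
qed

lemma sum_pow_le: "(\<Sum>j<L. real j ^ d) \<le> real L ^ Suc d / real (Suc d)"
proof -
  have "(\<Sum>j<L. real (Suc d) * real j ^ d) \<le> (\<Sum>j<L. (real j + 1) ^ Suc d - real j ^ Suc d)"
    by (intro sum_mono pw_step) auto
  also have "\<dots> = (\<Sum>j<L. real (Suc j) ^ Suc d - real j ^ Suc d)" by (simp add: add.commute)
  also have "\<dots> = real L ^ Suc d" by (subst sum_lessThan_telescope) simp
  finally have "real (Suc d) * (\<Sum>j<L. real j ^ d) \<le> real L ^ Suc d" by (simp add: sum_distrib_left)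
  thus ?thesis by (simp add: field_simps)
qed

lemma abstract:
  fixes g :: "nat \<Rightarrow> real" and A c0 E M :: real and d :: nat
  assumes A: "A \<ge> 0" and c0: "c0 > 0" and M: "M > 0" and E: "E \<ge> 0"
    and dA: "2 * A \<le> c0 * real (Suc d)"
    and hyp: "\<And>L. L \<ge> 1 \<Longrightarrow> g L \<le> (\<Sum>j\<in>{1..<L}. A * (real L - real j) * g j) / (c0 * real L ^ 2) + E * real L ^ d / M"
  shows "L \<ge> 1 \<Longrightarrow> g L \<le> (2 * E + 1) * real L ^ d / M"
proof (induction L rule: less_induct)
  case (less L)
  define K where "K = 2 * E + 1"
  have K: "K > 0" using E by (simp add: K_def)
  have L: "real L \<ge> 1" using less.prems by simp
  have "(\<Sum>j\<in>{1..<L}. A * (real L - real j) * g j) \<le> (\<Sum>j\<in>{1..<L}. A * real L * (K * real j ^ d / M))"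
  proof (rule sum_mono)
    fix j assume j: "j \<in> {1..<L}"
    have "g j \<le> K * real j ^ d / M" using less.IH[of j] j by (auto simp: K_def)
    hence "A * (real L - real j) * g j \<le> A * (real L - real j) * (K * real j ^ d / M)"
      using j A by (intro mult_left_mono) auto
    also have "\<dots> \<le> A * real L * (K * real j ^ d / M)"
      using A K M by (intro mult_right_mono mult_left_mono) auto
    finally show "A * (real L - real j) * g j \<le> A * real L * (K * real j ^ d / M)" .
  qed
  also have "\<dots> = A * real L * K / M * (\<Sum>j\<in>{1..<L}. real j ^ d)"
    by (simp add: sum_distrib_left mult_ac)
  also have "\<dots> \<le> A * real L * K / M * (\<Sum>j<L. real j ^ d)"
    using A K M by (intro mult_left_mono sum_mono2) auto
  also have "\<dots> \<le> A * real L * K / M * (real L ^ Suc d / real (Suc d))"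
    using A K M by (intro mult_left_mono sum_pow_le) auto
  finally have s: "(\<Sum>j\<in>{1..<L}. A * (real L - real j) * g j) \<le> A * real L * K / M * (real L ^ Suc d / real (Suc d))" .
  have "(\<Sum>j\<in>{1..<L}. A * (real L - real j) * g j) / (c0 * real L ^ 2)
     \<le> (A * real L * K / M * (real L ^ Suc d / real (Suc d))) / (c0 * real L ^ 2)"
    using s c0 L by (intro divide_right_mono) auto
  also have "\<dots> = (A / (c0 * real (Suc d))) * (K * real L ^ d / M)"
  proof -
    have "A * real L * K / M * (real L ^ Suc d / real (Suc d)) = (A / (c0 * real (Suc d))) * (K * real L ^ d / M) * (c0 * real L ^ 2)"
      using c0 M by (simp add: field_simps power2_eq_square del: of_nat_Suc)
    moreover have "c0 * real L ^ 2 \<noteq> 0" using c0 L by auto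
    ultimately show ?thesis by simp
  qed
  also have "\<dots> \<le> (1/2) * (K * real L ^ d / M)"
  proof (rule mult_right_mono)
    have pos: "c0 * real (Suc d) > 0" using c0 by simp
    show "A / (c0 * real (Suc d)) \<le> 1/2" unfolding pos_divide_le_eq[OF pos] using dA by linarith
  qed (use K M in auto)
  finally have "g L \<le> (1/2) * (K * real L ^ d / M) + E * real L ^ d / M"
    using hyp[OF less.prems] by linarith
  also have "\<dots> = (K/2 + E) * (real L ^ d / M)" using M by (simp add: field_simps)
  also have "\<dots> \<le> K * (real L ^ d / M)"
    using M E by (intro mult_right_mono) (auto simp: K_def)
  also have "\<dots> = K * real L ^ d / M" by simp
  finally show ?case by (simp add: K_def)
qed



lemma Gamma0_hd: "(deriv ^^ h) (Gamma m k 0) z = (if h = 0 then 1 else 0)"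
proof -
  have "Gamma m k 0 = (\<lambda>_. 1)" by auto
  thus ?thesis by (simp add: hd_const)
qed

lemma step_bound:
  fixes A K' e :: real and d h :: nat
  assumes e: "0 < e" "e < 1" and A: "A \<ge> 0" and om: "\<And>j. \<bar>omega_coeff m k j\<bar> \<le> A * real j"
    and dA: "2 * A \<le> (e/4) * real (Suc d)" and K': "K' \<ge> 0"
    and prev: "\<And>L z. h > 0 \<Longrightarrow> L \<ge> 1 \<Longrightarrow> z \<in> - Omega_eps e \<Longrightarrow>
       cmod ((deriv ^^ (h - 1)) (Gamma m k L) z) \<le> K' * real L ^ d / (1 + cmod z) ^ h"
  shows "\<exists>K>0. \<forall>L z. L \<ge> 1 \<longrightarrow> z \<in> - Omega_eps e \<longrightarrow>
       cmod ((deriv ^^ h) (Gamma m k L) z) \<le> K * real L ^ d / (1 + cmod z) ^ Suc h"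
proof -
  define c0 where "c0 = e / 4"
  have c0: "c0 > 0" using e by (simp add: c0_def)
  define E where "E = A / c0 + (if h = 0 then 0 else 2 * real h * K' / c0)"
  have E: "E \<ge> 0" using A c0 K' by (auto simp: E_def)
  have main: "cmod ((deriv ^^ h) (Gamma m k L) z) \<le> (2 * E + 1) * real L ^ d / (1 + cmod z) ^ Suc h"
    if L1: "L \<ge> 1" and z: "z \<in> - Omega_eps e" for L z
  proof -
    define N where "N = 1 + cmod z"
    have N: "N \<ge> 1" by (simp add: N_def)
    define M where "M = N ^ Suc h"
    have M: "M > 0" using N by (simp add: M_def)
    define g where "g L = cmod ((deriv ^^ h) (Gamma m k L) z)" for L
    have "g L \<le> (2 * E + 1) * real L ^ d / M"
    proof (rule abstract[OF A c0 M E _ _ L1])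
      show "2 * A \<le> c0 * real (Suc d)" using dA by (simp add: c0_def)
    next
      fix L :: nat assume L: "L \<ge> 1"
      then obtain l where l: "L = Suc l" by (cases L) auto
      have Lr: "real L \<ge> 1" using L by simp
      define p :: complex where "p = of_nat L * of_nat L + (- 2 * \<i> * of_nat L) * z"
      define T :: complex where "T = (if h = 0 then 0 else of_nat h * (- 2 * \<i> * of_nat L) * (deriv ^^ (h - 1)) (Gamma m k L) z)"
      define R where "R = (\<Sum>j<L. complex_of_real (omega_coeff m k (L - j)) * (deriv ^^ h) (Gamma m k j) z)"
      have rec: "p * (deriv ^^ h) (Gamma m k L) z + T = R"
        using Gamma_rec_deriv[OF e z, of l h m k] unfolding p_def T_def R_def l by simp
      define X where "X = cmod (of_real (real L) - 2 * \<i> * z)"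
      have X1: "X \<ge> c0 * real L"
      proof -
        have "X \<ge> (e/2) * real L" using reg1[OF e, of z "real L"] z Lr by (simp add: X_def)
        moreover have "c0 * real L \<le> (e/2) * real L" using e Lr by (intro mult_right_mono) (auto simp: c0_def)
        ultimately show ?thesis by linarith
      qed
      have X2: "X \<ge> c0 * N" using reg2[OF e, of z "real L"] z Lr by (simp add: X_def c0_def N_def)
      have pX: "p = of_nat L * (of_real (real L) - 2 * \<i> * z)" by (simp add: p_def algebra_simps)
      define P where "P = cmod p"
      have PX: "P = real L * X" by (simp add: P_def pX X_def norm_mult)
      have P1: "P \<ge> c0 * real L ^ 2"
        using X1 Lr unfolding PX power2_eq_square by (simp add: mult_left_mono mult.assoc[symmetric] mult.commute[of c0])
      have P2: "P \<ge> c0 * real L * N"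
        using X2 Lr unfolding PX by (metis mult.assoc mult.commute mult_left_mono of_nat_0_le_iff)
      have Ppos: "P > 0" using P1 c0 Lr by (smt (verit) zero_less_power mult_pos_pos)
      have "g L = cmod (R - T) / P"
      proof -
        have "(deriv ^^ h) (Gamma m k L) z = (R - T) / p" using rec Ppos by (auto simp: P_def field_simps)
        thus ?thesis by (simp add: g_def P_def norm_divide)
      qed
      also have "\<dots> \<le> (cmod R + cmod T) / P"
        using Ppos by (intro divide_right_mono norm_triangle_ineq4) auto
      finally have gL: "g L \<le> (cmod R + cmod T) / P" .
      define Rs where "Rs = (\<Sum>j\<in>{1..<L}. A * (real L - real j) * g j)"
      have Rs0: "Rs \<ge> 0" unfolding Rs_def using A by (intro sum_nonneg) (auto simp: g_def)
      have "cmod R \<le> (\<Sum>j<L. cmod (complex_of_real (omega_coeff m k (L - j)) * (deriv ^^ h) (Gamma m k j) z))"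
        unfolding R_def by (rule norm_sum)
      also have "\<dots> \<le> (\<Sum>j<L. A * (real L - real j) * g j)"
      proof (rule sum_mono)
        fix j assume j: "j \<in> {..<L}"
        have "\<bar>omega_coeff m k (L - j)\<bar> \<le> A * (real L - real j)" using om[of "L - j"] j by (simp add: of_nat_diff)
        thus "cmod (complex_of_real (omega_coeff m k (L - j)) * (deriv ^^ h) (Gamma m k j) z) \<le> A * (real L - real j) * g j"
          by (simp add: norm_mult g_def mult_right_mono)
      qed
      also have "\<dots> = A * real L * g 0 + Rs"
        using L by (simp add: Rs_def lessThan_atLeast0 sum.atLeast_Suc_lessThan)
      finally have Rb: "cmod R \<le> A * real L * g 0 + Rs" .
      have g0: "g 0 = (if h = 0 then 1 else 0)" by (simp add: g_def Gamma0_hd)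
      have C1: "A * real L * g 0 / P \<le> (A / c0) * (real L ^ d / M)"
      proof (cases "h = 0")
        case True
        have "A * real L / P \<le> A * real L / (c0 * real L * N)"
          using P2 A Lr c0 N Ppos by (intro divide_left_mono) (auto intro!: mult_pos_pos)
        also have "\<dots> = (A / c0) * (1 / N)" using Lr by (simp add: field_simps)
        also have "\<dots> \<le> (A / c0) * (real L ^ d / N)"
          using A c0 N Lr by (intro mult_left_mono divide_right_mono) auto
        finally show ?thesis using True g0 by (simp add: M_def)
      next
        case False
        thus ?thesis using g0 A c0 M by auto
      qed
      have C2: "Rs / P \<le> Rs / (c0 * real L ^ 2)"
        using P1 Rs0 c0 Lr Ppos by (intro divide_left_mono) (auto intro!: mult_pos_pos)
      have C3: "cmod T / P \<le> (if h = 0 then 0 else 2 * real h * K' / c0) * (real L ^ d / M)"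
      proof (cases "h = 0")
        case True thus ?thesis by (simp add: T_def)
      next
        case False
        have "cmod T = real h * 2 * real L * cmod ((deriv ^^ (h - 1)) (Gamma m k L) z)"
          using False by (simp add: T_def norm_mult)
        also have "\<dots> \<le> real h * 2 * real L * (K' * real L ^ d / N ^ h)"
          using prev[OF _ L z] False by (intro mult_left_mono) (auto simp: N_def)
        finally have Tb: "cmod T \<le> real h * 2 * real L * (K' * real L ^ d / N ^ h)" .
        have "cmod T / P \<le> (real h * 2 * real L * (K' * real L ^ d / N ^ h)) / (c0 * real L * N)"
          using Tb P2 c0 Lr N K' by (intro frac_le) auto
        also have "\<dots> = (2 * real h * K' / c0) * (real L ^ d / M)"
          using Lr c0 N by (simp add: M_def field_simps)
        finally show ?thesis using False by simp
      qed
      have "g L \<le> (A * real L * g 0 + Rs + cmod T) / P"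
        using gL Rb Ppos by (smt (verit) divide_right_mono)
      also have "\<dots> = A * real L * g 0 / P + Rs / P + cmod T / P" by (simp add: add_divide_distrib)
      also have "\<dots> \<le> (A / c0) * (real L ^ d / M) + Rs / (c0 * real L ^ 2)
          + (if h = 0 then 0 else 2 * real h * K' / c0) * (real L ^ d / M)"
        using C1 C2 C3 by linarith
      also have "\<dots> = Rs / (c0 * real L ^ 2) + E * real L ^ d / M"
        using M c0 by (simp add: E_def field_simps)
      finally show "g L \<le> (\<Sum>j\<in>{1..<L}. A * (real L - real j) * g j) / (c0 * real L ^ 2) + E * real L ^ d / M"
        by (simp add: Rs_def)
    qed
    thus ?thesis by (simp add: g_def M_def N_def)
  qed
  show ?thesis using E main by (intro exI[of _ "2 * E + 1"]) auto
qed



theorem lemma2p1: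
  fixes m k :: nat and \<epsilon> :: real
  assumes "even m" and "m \<ge> 2" and "k \<ge> 1"
    and "0 < \<epsilon>" and "\<epsilon> < 1"
  shows "\<exists>d>0. \<forall>h::nat. \<exists>C>0. \<forall>l::nat. \<forall>lam::complex.
           l \<ge> 1 \<longrightarrow> lam \<notin> Omega_eps \<epsilon> \<longrightarrow>
           cmod ((deriv ^^ h) (Gamma m k l) lam)
             \<le> C * real l powr d * (1 + cmod lam) powr (- real h - 1)"
proof -
  have e: "0 < \<epsilon>" "\<epsilon> < 1" using assms by auto
  define A where "A = \<bar>(real m/2) * (Qpar m k - 1)\<bar> + \<bar>4 * ((real k/2) * (real k/2 - 1))\<bar>"
  have A: "A \<ge> 0" by (simp add: A_def)
  have om: "\<bar>omega_coeff m k j\<bar> \<le> A * real j" for j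
    unfolding omega_coeff_eq A_def by (rule oc_bound)
  define d where "d = nat \<lceil>2 * A / (\<epsilon>/4)\<rceil> + 1"
  have dA: "2 * A \<le> (\<epsilon>/4) * real (Suc d)"
  proof -
    have "2 * A / (\<epsilon>/4) \<le> real (Suc d)" unfolding d_def by linarith
    thus ?thesis using e by (simp add: field_simps)
  qed
  have hb: "\<exists>K>0. \<forall>L z. L \<ge> 1 \<longrightarrow> z \<in> - Omega_eps \<epsilon> \<longrightarrow>
       cmod ((deriv ^^ h) (Gamma m k L) z) \<le> K * real L ^ d / (1 + cmod z) ^ Suc h" for h
  proof (induction h)
    case 0
    show ?case by (rule step_bound[OF e A om dA, of 0]) auto
  next
    case (Suc h)
    then obtain K where K: "K > 0" "\<forall>L z. L \<ge> 1 \<longrightarrow> z \<in> - Omega_eps \<epsilon> \<longrightarrow>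
       cmod ((deriv ^^ h) (Gamma m k L) z) \<le> K * real L ^ d / (1 + cmod z) ^ Suc h" by blast
    show ?case by (rule step_bound[OF e A om dA, of K]) (use K in auto)
  qed
  show ?thesis
  proof (rule exI[of _ "real d"], intro conjI allI)
    show "real d > 0" by (simp add: d_def)
  next
    fix h :: nat
    obtain K where K: "K > 0" "\<forall>L z. L \<ge> 1 \<longrightarrow> z \<in> - Omega_eps \<epsilon> \<longrightarrow>
       cmod ((deriv ^^ h) (Gamma m k L) z) \<le> K * real L ^ d / (1 + cmod z) ^ Suc h" using hb by blast
    show "\<exists>C>0. \<forall>l lam. 1 \<le> l \<longrightarrow> lam \<notin> Omega_eps \<epsilon> \<longrightarrow>
        cmod ((deriv ^^ h) (Gamma m k l) lam) \<le> C * real l powr real d * (1 + cmod lam) powr (- real h - 1)"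
    proof (rule exI[of _ K], intro conjI allI impI)
      fix l :: nat and lam :: complex assume l: "1 \<le> l" and lam: "lam \<notin> Omega_eps \<epsilon>"
      have N: "1 + cmod lam > 0" by (smt (verit) norm_ge_zero)
      have p1: "real l powr real d = real l ^ d" using l by (simp add: powr_realpow)
      have e1: "- real h - 1 = - real (Suc h)" by simp
      have "(1 + cmod lam) powr (- real h - 1) = (1 + cmod lam) powr (- real (Suc h))" by (simp only: e1)
      also have "\<dots> = inverse ((1 + cmod lam) ^ Suc h)"
        using N by (simp add: powr_minus powr_realpow del: of_nat_Suc)
      finally have p2: "(1 + cmod lam) powr (- real h - 1) = 1 / (1 + cmod lam) ^ Suc h"
        by (simp add: inverse_eq_divide)
      show "cmod ((deriv ^^ h) (Gamma m k l) lam) \<le> K * real l powr real d * (1 + cmod lam) powr (- real h - 1)"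
        using K(2) l lam unfolding p1 p2 by simp
    qed (use K in auto)
  qed
qed


end
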